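(* Let $(R,\Lambda,S)$ be a generalised Renner–Coxeter system. (i) For every chain $e_1\le e_2\le\cdots\le e_m$ in $E(R)$ there exist $w\in G(R)$ and a chain $f_1\le f_2\le\cdots\le f_m$ in $\Lambda$ such that $wf_iw^{-1}=e_i$ for every $i$. (ii) If $\Lambda$ has a least element $e$, then $\lambda(e)=S$. (iii) For all $e,f\in\Lambda$ and $w\in\mathrm{Red}(e,f)$, $ewf=\max\{h\in\Lambda\mid h\le e,\ h\le f,\ w\in W(h)\}=fw^{-1}e$.
   Context: For a monoid $R$, $E(R)$ is its set of idempotents, $G(R)$ its unit group. $R$ is factorisable if $R=E(R)G(R)=G(R)E(R)$ and idempotents commute; then $E(R)$ is a semilattice ($e\le f\iff ef=fe=e$) on which $G(R)$ acts by conjugation. For $e\in E(R)$, $W(e)=\{w\in G(R)\mid we=ew\}$, $W_\star(e)=\{w\mid we=ew=e\}$. For a Coxeter system $(W,S)$, $W_I$ is the subgroup generated by $I\subseteq S$. A generalised Renner–Coxeter system is a triple $(R,\Lambda,S)$ with: (ECS1) $R$ factorisable; (ECS2) $\Lambda\subseteq E(R)$ contains exactly one element of each $G(R)$-orbit and is closed under multiplication; (ECS3) $(G(R),S)$ is a Coxeter system; (ECS4) for $e_1\le e_2$ in $E(R)$ there are $w\in G(R)$, $f_1\le f_2$ in $\Lambda$ with $wf_iw^{-1}=e_i$; (ECS5) for $e\in\Lambda$, $W(e)$, $W_\star(e)$ are of the form $W_I$; (ECS6) with $\lambda^\star(e)=\{s\in S\mid se=es\ne e\}$, $e\le f$ in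 $\Lambda$ implies $\lambda^\star(e)\subseteq\lambda^\star(f)$. For $e\in\Lambda$, $\lambda(e)\subseteq S$ is defined by $W(e)=W_{\lambda(e)}$. $\mathrm{Red}(e,f)$ is the set of $w\in G(R)$ of minimal Coxeter length in $W_{\lambda(e)}wW_{\lambda(f)}$. *)

theory Defs
  imports Main
begin

text \<open>The monoid R is modelled as the whole of a type of class monoid_mult (R = UNIV).\<close>

definition idems :: "'a::monoid_mult set" where
  "idems = {e. e * e = e}"

definition unitgrp :: "'a::monoid_mult set" where
  "unitgrp = {u. \<exists>v. u * v = 1 \<and> v * u = 1}"

definition uinv :: "'a::monoid_mult \<Rightarrow> 'a" where
  "uinv u = (THE v. u * v = 1 \<and> v * u = 1)"

definition ileq :: "'a::monoid_mult \<Rightarrow> 'a \<Rightarrow> bool" where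
  "ileq e f \<longleftrightarrow> e * f = e \<and> f * e = e"

definition factorisable :: "'a::monoid_mult set \<Rightarrow> bool" where
  "factorisable R \<longleftrightarrow>
     R = {e * g | e g. e \<in> idems \<and> g \<in> unitgrp} \<and>
     R = {g * e | e g. e \<in> idems \<and> g \<in> unitgrp} \<and>
     (\<forall>e\<in>idems. \<forall>f\<in>idems. e * f = f * (e::'a))"

text \<open>Coxeter systems via the Coxeter presentation: the congruence on words over S
  generated by the relations s s = 1 and (s t)^m(s,t) = 1, m(s,t) the order of st.\<close>

definition cox_m :: "'a::monoid_mult \<Rightarrow> 'a \<Rightarrow> nat" where
  "cox_m s t = (LEAST m. 0 < m \<and> (s * t) ^ m = 1)"

inductive cox_cong :: "'a::monoid_mult set \<Rightarrow> 'a list \<Rightarrow> 'a list \<Rightarrow> bool" for S where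
  cc_refl: "cox_cong S u u"
| cc_sym: "cox_cong S u v \<Longrightarrow> cox_cong S v u"
| cc_trans: "cox_cong S u v \<Longrightarrow> cox_cong S v w \<Longrightarrow> cox_cong S u w"
| cc_ctxt: "cox_cong S u v \<Longrightarrow> cox_cong S (x @ u @ y) (x @ v @ y)"
| cc_sq: "s \<in> S \<Longrightarrow> cox_cong S [s, s] []"
| cc_braid: "s \<in> S \<Longrightarrow> t \<in> S \<Longrightarrow> (\<exists>m>0. (s * t) ^ m = 1) \<Longrightarrow>
     cox_cong S (concat (replicate (cox_m s t) [s, t])) []"

definition coxeter_system :: "'a::monoid_mult set \<Rightarrow> 'a set \<Rightarrow> bool" where
  "coxeter_system W S \<longleftrightarrow>
     S \<subseteq> W \<and> 1 \<notin> S \<and> (\<forall>s\<in>S. s * s = 1) \<and>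
     W = {prod_list ws | ws. ws \<in> lists S} \<and>
     (\<forall>u\<in>lists S. \<forall>v\<in>lists S. prod_list u = prod_list v \<longrightarrow> cox_cong S u v)"

definition parab :: "'a::monoid_mult set \<Rightarrow> 'a set" where
  "parab I = {prod_list ws | ws. ws \<in> lists I}"

definition cox_len :: "'a::monoid_mult set \<Rightarrow> 'a \<Rightarrow> nat" where
  "cox_len S w = (LEAST n. \<exists>ws\<in>lists S. length ws = n \<and> prod_list ws = w)"

definition Wc :: "'a::monoid_mult \<Rightarrow> 'a set" where
  "Wc e = {w \<in> unitgrp. w * e = e * w}"

definition Wstar :: "'a::monoid_mult \<Rightarrow> 'a set" where
  "Wstar e = {w \<in> unitgrp. w * e = e \<and> e * w = e}"

definition lam :: "'a::monoid_mult set \<Rightarrow> 'a \<Rightarrow> 'a set" where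
  "lam S e = (THE I. I \<subseteq> S \<and> Wc e = parab I)"

definition lamstar :: "'a::monoid_mult set \<Rightarrow> 'a \<Rightarrow> 'a set" where
  "lamstar S e = {s \<in> S. s * e = e * s \<and> s * e \<noteq> e}"

definition gen_RC_system :: "'a::monoid_mult set \<Rightarrow> 'a set \<Rightarrow> bool" where
  "gen_RC_system \<Lambda> S \<longleftrightarrow>
     factorisable (UNIV :: 'a set) \<and>
     (\<Lambda> \<subseteq> idems \<and> (\<forall>e\<in>idems. \<exists>!f. f \<in> \<Lambda> \<and> (\<exists>w\<in>unitgrp. w * f * uinv w = e))
        \<and> (\<forall>e\<in>\<Lambda>. \<forall>f\<in>\<Lambda>. e * f \<in> \<Lambda>)) \<and>
     coxeter_system unitgrp S \<and>
     (\<forall>e1\<in>idems. \<forall>e2\<in>idems. ileq e1 e2 \<longrightarrow>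
        (\<exists>w\<in>unitgrp. \<exists>f1\<in>\<Lambda>. \<exists>f2\<in>\<Lambda>. ileq f1 f2 \<and>
           w * f1 * uinv w = e1 \<and> w * f2 * uinv w = e2)) \<and>
     (\<forall>e\<in>\<Lambda>. (\<exists>I. I \<subseteq> S \<and> Wc e = parab I) \<and> (\<exists>I. I \<subseteq> S \<and> Wstar e = parab I)) \<and>
     (\<forall>e\<in>\<Lambda>. \<forall>f\<in>\<Lambda>. ileq e f \<longrightarrow> lamstar S e \<subseteq> lamstar S f)"

definition Red :: "'a::monoid_mult set \<Rightarrow> 'a \<Rightarrow> 'a \<Rightarrow> 'a set" where
  "Red S e f = {w \<in> unitgrp. \<forall>a\<in>parab (lam S e). \<forall>b\<in>parab (lam S f).
                 cox_len S w \<le> cox_len S (a * w * b)}"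

definition is_max_ileq :: "'a::monoid_mult set \<Rightarrow> 'a \<Rightarrow> bool" where
  "is_max_ileq H x \<longleftrightarrow> x \<in> H \<and> (\<forall>h\<in>H. ileq h x)"

end

theory Submission
  imports Defs "HOL-Library.Multiset"
begin

fun refls :: "'a::monoid_mult list \<Rightarrow> 'a list" where
  "refls [] = []"
| "refls (x # xs) = x # map (\<lambda>z. x * z * x) (refls xs)"

lemma length_refls[simp]: "length (refls xs) = length xs"
  by (induct xs) auto

lemma refls_append:
  "refls (a @ b) = refls a @ map (\<lambda>z. prod_list a * z * prod_list (rev a)) (refls b)"
proof (induct a)
  case Nil then show ?case by simp
next
  case (Cons x a)
  then show ?case by (simp add: comp_def mult.assoc)
qed

definition peq :: "'a multiset \<Rightarrow> 'a multiset \<Rightarrow> bool" where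
  "peq M N \<longleftrightarrow> (\<exists>C D. M + C + C = N + D + D)"

lemma peq_refl: "peq M M" unfolding peq_def by blast
lemma peq_sym: "peq M N \<Longrightarrow> peq N M" unfolding peq_def by metis
lemma peq_trans: assumes "peq M N" "peq N P" shows "peq M P"
proof -
  obtain C D where 1: "M + C + C = N + D + D" using assms(1) unfolding peq_def by blast
  obtain E F where 2: "N + E + E = P + F + F" using assms(2) unfolding peq_def by blast
  have "M + (C+E) + (C+E) = (M + C + C) + E + E" by (simp add: ac_simps)
  also have "\<dots> = (N + E + E) + D + D" using 1 by (simp add: ac_simps)
  also have "\<dots> = P + (F + D) + (F + D)" using 2 by (simp add: ac_simps)
  finally show ?thesis unfolding peq_def by blast
qed
lemma peq_add: assumes "peq M N" "peq M' N'" shows "peq (M + M') (N + N')"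
proof -
  obtain C D where 1: "M + C + C = N + D + D" using assms(1) unfolding peq_def by blast
  obtain E F where 2: "M' + E + E = N' + F + F" using assms(2) unfolding peq_def by blast
  have "(M + M') + (C+E) + (C+E) = (M + C + C) + (M' + E + E)" by (simp add: ac_simps)
  also have "\<dots> = (N + N') + (D + F) + (D + F)" using 1 2 by (simp add: ac_simps)
  finally show ?thesis unfolding peq_def by blast
qed
lemma peq_image: assumes "peq M N" shows "peq (image_mset f M) (image_mset f N)"
proof -
  obtain C D where 1: "M + C + C = N + D + D" using assms(1) unfolding peq_def by blast
  have "image_mset f (M + C + C) = image_mset f (N + D + D)" using 1 by simp
  then show ?thesis unfolding peq_def by (metis image_mset_union)
qed
lemma peq_count: assumes "peq M N" shows "odd (count M x) = odd (count N x)"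
proof -
  obtain C D where 1: "M + C + C = N + D + D" using assms(1) unfolding peq_def by blast
  have "count (M + C + C) x = count (N + D + D) x" using 1 by simp
  then have "count M x + 2 * count C x = count N x + 2 * count D x" by simp
  then show ?thesis by presburger
qed

lemma inv_word:
  assumes "\<forall>x\<in>set xs. x * x = (1::'a::monoid_mult)"
  shows "prod_list xs * prod_list (rev xs) = 1 \<and> prod_list (rev xs) * prod_list xs = 1"
  using assms
proof (induct xs)
  case Nil then show ?case by simp
next
  case (Cons x xs)
  then have IH: "prod_list xs * prod_list (rev xs) = 1" "prod_list (rev xs) * prod_list xs = 1"
    and xx: "x * x = 1" by auto
  have "x * prod_list xs * (prod_list (rev xs) * x) = x * (prod_list xs * prod_list (rev xs)) * x"
    by (simp add: mult.assoc)
  also have "\<dots> = 1" using IH xx by simp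
  finally have a: "x * prod_list xs * (prod_list (rev xs) * x) = 1" .
  have "prod_list (rev xs) * x * (x * prod_list xs) = prod_list (rev xs) * (x * x) * prod_list xs"
    by (simp add: mult.assoc)
  also have "\<dots> = 1" using IH xx by simp
  finally have b: "prod_list (rev xs) * x * (x * prod_list xs) = 1" .
  show ?case using a b by (simp add: mult.assoc)
qed

lemma power_shift: "(s * t) ^ j * s = s * ((t * s) ^ j :: 'a::monoid_mult)"
  by (induct j) (simp_all add: mult.assoc)

lemma refls_braid:
  fixes s t :: "'a::monoid_mult"
  assumes "s * s = 1" "t * t = 1"
  shows "refls (concat (replicate k [s, t])) = map (\<lambda>j. (s*t)^j * s) [0..<2*k]"
proof (induct k)
  case 0 then show ?case by simp
next
  case (Suc k)
  have u: "[0..<2 * Suc k] = 0 # 1 # map (\<lambda>j. j + 2) [0..<2*k]"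
    by (simp add: upt_conv_Cons map_Suc_upt[symmetric] del: upt_Suc)
  have e: "s * (t * ((s * t) ^ j * (s * (t * s)))) = (s * t) ^ (j + 2) * s" for j
  proof -
    have "s * (t * ((s * t) ^ j * (s * (t * s)))) = (s * t) * (s * t) ^ j * (s * t) * s"
      by (simp add: mult.assoc)
    also have "\<dots> = (s*t)^(j+2) * s"
      by (simp add: mult.assoc power_commutes)
    finally show ?thesis .
  qed
  show ?case unfolding u using Suc by (simp add: comp_def e mult.assoc del: upt_Suc)
qed

lemma cc_inv:
  assumes inv: "\<forall>s\<in>S. s * s = (1::'a::monoid_mult)"
  shows "cox_cong S u v \<Longrightarrow> prod_list u = prod_list v \<and> prod_list (rev u) = prod_list (rev v)
          \<and> peq (mset (refls u)) (mset (refls v))"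
proof (induct rule: cox_cong.induct)
  case (cc_refl u) then show ?case by (simp add: peq_refl)
next
  case (cc_sym u v) then show ?case by (simp add: peq_sym)
next
  case (cc_trans u v w) then show ?case by (metis peq_trans)
next
  case (cc_ctxt u v x y)
  then have pu: "prod_list u = prod_list v" and ru: "prod_list (rev u) = prod_list (rev v)"
    and pe: "peq (mset (refls u)) (mset (refls v))" by auto
  let ?f = "\<lambda>z. prod_list x * z * prod_list (rev x)"
  let ?g = "\<lambda>z. prod_list v * z * prod_list (rev v)"
  have "peq (mset (refls x) + (image_mset ?f (mset (refls u)) + image_mset (?f \<circ> ?g) (mset (refls y))))
             (mset (refls x) + (image_mset ?f (mset (refls v)) + image_mset (?f \<circ> ?g) (mset (refls y))))"
    by (intro peq_add peq_refl peq_image pe)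
  then have "peq (mset (refls (x @ u @ y))) (mset (refls (x @ v @ y)))"
    by (simp add: refls_append pu ru)
  then show ?case by (simp add: pu ru)
next
  case (cc_sq s)
  then have "s * s = 1" using inv by auto
  then have "s * s * s = s" by simp
  have "mset (refls [s, s]) + {#} + {#} = mset (refls []) + {#s#} + {#s#}"
    using \<open>s * s * s = s\<close> by (simp add: mult.assoc)
  then have "peq (mset (refls [s, s])) (mset (refls []))" unfolding peq_def by blast
  then show ?case using \<open>s * s = 1\<close> by simp
next
  case (cc_braid s t)
  let ?m = "cox_m s t"
  have m: "0 < ?m \<and> (s * t) ^ ?m = 1" unfolding cox_m_def
    using cc_braid(3) by (rule LeastI_ex)
  have ss: "s * s = 1" "t * t = 1" using inv cc_braid by auto
  let ?L = "concat (replicate ?m [s, t])"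
  have pl: "prod_list (concat (replicate k [s, t])) = (s * t)^k" for k
    by (induct k) (simp_all add: mult.assoc)
  have inv2: "\<forall>x\<in>set ?L. x * x = 1" using ss by auto
  have p1: "prod_list ?L = 1" using pl m by simp
  have p2: "prod_list (rev ?L) = 1" using inv_word[OF inv2] p1 by simp
  define B where "B = map (\<lambda>j. (s*t)^j * s) [0..<?m]"
  have "refls ?L = B @ B"
  proof (rule nth_equalityI)
    show "length (refls ?L) = length (B @ B)" by (simp add: B_def length_concat sum_list_replicate)
  next
    fix j assume "j < length (refls ?L)"
    then have j: "j < 2 * ?m" by (simp add: length_concat sum_list_replicate)
    have r: "refls ?L ! j = (s*t)^j * s" using refls_braid[OF ss, of ?m] j by simp
    show "refls ?L ! j = (B @ B) ! j"
    proof (cases "j < ?m")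
      case True then show ?thesis using r by (simp add: B_def nth_append)
    next
      case False
      then have "(s*t)^j = (s*t)^(j - ?m)" using m
        by (metis le_add_diff_inverse not_less power_add mult_1_left)
      moreover have "j - ?m < ?m" using j False by linarith
      ultimately show ?thesis using r j False by (simp add: B_def nth_append)
    qed
  qed
  then have "mset (refls ?L) + {#} + {#} = mset (refls []) + mset B + mset B" by simp
  then have "peq (mset (refls ?L)) (mset (refls []))" unfolding peq_def by blast
  then show ?case using p1 p2 by simp
qed

lemma length_nths_le: "length (nths xs A) \<le> length xs"
proof -
  have "card {i. i < length xs \<and> i \<in> A} \<le> card {i. i < length xs}"
    by (rule card_mono) auto
  then show ?thesis by (simp add: length_nths)
qed

lemma refl_del:
  assumes "\<forall>x\<in>set xs. x * x = (1::'a::monoid_mult)" "z \<in> set (refls xs)"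
  shows "\<exists>j<length xs. z * prod_list xs = prod_list (nths xs (-{j}))"
  using assms
proof (induct xs arbitrary: z)
  case Nil then show ?case by simp
next
  case (Cons y ys)
  have yy: "y * y = 1" using Cons by simp
  show ?case
  proof (cases "z = y")
    case True
    have "nths (y # ys) (-{0}) = ys" by (simp add: nths_Cons nths_all)
    then have "z * prod_list (y # ys) = prod_list (nths (y # ys) (-{0}))"
      using True yy by (simp add: mult.assoc[symmetric])
    then show ?thesis by (intro exI[of _ 0]) simp
  next
    case False
    then obtain z' where z': "z' \<in> set (refls ys)" "z = y * z' * y" using Cons.prems by auto
    obtain j where j: "j < length ys" "z' * prod_list ys = prod_list (nths ys (-{j}))"
      using Cons z' by auto
    have "{k. Suc k \<in> - {Suc j}} = - {j}" by auto
    then have ns: "nths (y # ys) (-{Suc j}) = y # nths ys (-{j})"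
      by (simp add: nths_Cons)
    have "z * prod_list (y # ys) = y * z' * (y * y) * prod_list ys" using z' by (simp add: mult.assoc)
    also have "\<dots> = y * (z' * prod_list ys)" using yy by (simp add: mult.assoc)
    also have "\<dots> = prod_list (nths (y # ys) (-{Suc j}))" using j ns by simp
    finally show ?thesis using j by (intro exI[of _ "Suc j"]) simp
  qed
qed

lemma del_lemma:
  assumes "\<forall>x\<in>set xs. x * x = (1::'a::monoid_mult)" "\<not> distinct (refls xs)"
  shows "\<exists>A. length (nths xs A) < length xs \<and> prod_list (nths xs A) = prod_list xs"
  using assms
proof (induct xs)
  case Nil then show ?case by simp
next
  case (Cons x xs)
  have xx: "x * x = 1" using Cons by simp
  have inj: "inj (\<lambda>z. x * z * x)"
  proof (rule injI)
    fix a b assume "x * a * x = x * b * x"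
    then have "x * (x * a * x) * x = x * (x * b * x) * x" by simp
    then have "(x * x) * a * (x * x) = (x * x) * b * (x * x)" by (simp add: mult.assoc)
    then show "a = b" using xx by simp
  qed
  show ?case
  proof (cases "distinct (refls xs)")
    case False
    then obtain A where A: "length (nths xs A) < length xs" "prod_list (nths xs A) = prod_list xs"
      using Cons by auto
    let ?B = "insert 0 (Suc ` A)"
    have "{j. Suc j \<in> Suc ` A} = A" by auto
    then have "nths (x # xs) ?B = x # nths xs A" by (simp add: nths_Cons)
    then show ?thesis using A by (intro exI[of _ ?B]) simp
  next
    case True
    have "distinct (map (\<lambda>z. x * z * x) (refls xs))"
      using True inj_on_subset[OF inj subset_UNIV] by (simp add: distinct_map)
    then have "x \<in> set (map (\<lambda>z. x * z * x) (refls xs))"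
      using Cons.prems(2) by (metis distinct.simps(2) refls.simps(2))
    then obtain z where z: "z \<in> set (refls xs)" "x = x * z * x" by auto
    have "z = x" using z(2) xx
      by (metis mult.assoc mult_1_left mult_1_right)
    then obtain j where j: "j < length xs" "x * prod_list xs = prod_list (nths xs (-{j}))"
      using refl_del[of xs x] Cons z by auto
    let ?B = "- {0, Suc j}"
    have "{k. Suc k \<in> ?B} = - {j}" by auto
    then have "nths (x # xs) ?B = nths xs (-{j})" by (simp add: nths_Cons)
    moreover have "length (nths xs (-{j})) < length (x # xs)"
      using length_nths_le[of xs "-{j}"] by simp
    ultimately show ?thesis using j by (intro exI[of _ ?B]) simp
  qed
qed

lemma cs_facts:
  assumes "coxeter_system (unitgrp::'a::monoid_mult set) S"
  shows "S \<subseteq> unitgrp" "1 \<notin> S" "\<forall>s\<in>S. s * s = 1" "unitgrp = parab S"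
    "\<And>u v. u \<in> lists S \<Longrightarrow> v \<in> lists S \<Longrightarrow> prod_list u = prod_list v \<Longrightarrow> cox_cong S u v"
  using assms unfolding coxeter_system_def parab_def by auto

lemma cox_len_le: "ws \<in> lists S \<Longrightarrow> cox_len S (prod_list ws) \<le> length ws"
  unfolding cox_len_def by (rule Least_le) blast

lemma cox_len_ex: assumes "ws \<in> lists S"
  shows "\<exists>vs\<in>lists S. length vs = cox_len S (prod_list ws) \<and> prod_list vs = prod_list ws"
proof -
  have "\<exists>vs\<in>lists S. length vs = (LEAST n. \<exists>vs\<in>lists S. length vs = n \<and> prod_list vs = prod_list ws)
          \<and> prod_list vs = prod_list ws"
    by (rule LeastI_ex[where P = "\<lambda>n. \<exists>vs\<in>lists S. length vs = n \<and> prod_list vs = prod_list ws"])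
       (use assms in blast)
  then show ?thesis unfolding cox_len_def .
qed

lemma distinct_len:
  assumes cs: "coxeter_system (unitgrp::'a::monoid_mult set) S" and ws: "ws \<in> lists S"
    and d: "distinct (refls ws)"
  shows "length ws \<le> cox_len S (prod_list ws)"
proof -
  obtain vs where vs: "vs \<in> lists S" "length vs = cox_len S (prod_list ws)" "prod_list vs = prod_list ws"
    using cox_len_ex[OF ws] by blast
  have "cox_cong S ws vs" using cs_facts(5)[OF cs ws vs(1)] vs(3) by simp
  then have pe: "peq (mset (refls ws)) (mset (refls vs))"
    using cc_inv[OF cs_facts(3)[OF cs]] by blast
  have sub: "set (refls ws) \<subseteq> set (refls vs)"
  proof
    fix t assume t: "t \<in> set (refls ws)"
    have "count (mset (refls ws)) t = 1" using d t by (simp add: distinct_count_atmost_1)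
    then have "odd (count (mset (refls vs)) t)" using peq_count[OF pe, of t] by simp
    then have "count (mset (refls vs)) t \<noteq> 0" by presburger
    then show "t \<in> set (refls vs)" by (simp add: count_mset_0_iff)
  qed
  have "length ws = card (set (refls ws))" using distinct_card[OF d] by simp
  also have "\<dots> \<le> card (set (refls vs))" by (rule card_mono[OF _ sub]) simp
  also have "\<dots> \<le> length (refls vs)" by (rule card_length)
  also have "\<dots> = cox_len S (prod_list ws)" using vs by simp
  finally show ?thesis .
qed

lemma nths_lists: "xs \<in> lists I \<Longrightarrow> nths xs A \<in> lists I"
  using set_nths_subset[of xs A] by auto

lemma C1:
  assumes cs: "coxeter_system (unitgrp::'a::monoid_mult set) S" and I: "I \<subseteq> S"
    and s: "s \<in> S" "s \<in> parab I"
  shows "s \<in> I"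
proof -
  let ?P = "\<lambda>n. \<exists>\<alpha>\<in>lists I. length \<alpha> = n \<and> prod_list \<alpha> = s"
  have ex: "\<exists>n. ?P n" using s(2) unfolding parab_def by blast
  obtain \<alpha> where \<alpha>: "\<alpha> \<in> lists I" "length \<alpha> = (LEAST n. ?P n)" "prod_list \<alpha> = s"
    using LeastI_ex[OF ex] by blast
  have \<alpha>S: "\<alpha> \<in> lists S" using \<alpha>(1) I by auto
  have inv: "\<forall>x\<in>set \<alpha>. x * x = 1" using cs_facts(3)[OF cs] \<alpha>S by auto
  have d: "distinct (refls \<alpha>)"
  proof (rule ccontr)
    assume "\<not> distinct (refls \<alpha>)"
    then obtain A where A: "length (nths \<alpha> A) < length \<alpha>" "prod_list (nths \<alpha> A) = prod_list \<alpha>"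
      using del_lemma[OF inv] by blast
    have "nths \<alpha> A \<in> lists I" by (rule nths_lists[OF \<alpha>(1)])
    then have "?P (length (nths \<alpha> A))" using A(2) \<alpha>(3) by (intro bexI[of _ "nths \<alpha> A"]) simp_all
    then have "(LEAST n. ?P n) \<le> length (nths \<alpha> A)" by (rule Least_le)
    then show False using A \<alpha> by simp
  qed
  have "length \<alpha> \<le> cox_len S s" using distinct_len[OF cs \<alpha>S d] \<alpha> by simp
  also have "\<dots> \<le> 1" using cox_len_le[of "[s]" S] s by simp
  finally have "length \<alpha> \<le> 1" .
  moreover have "\<alpha> \<noteq> []" using \<alpha>(3) cs_facts(2)[OF cs] s by auto
  ultimately obtain a where "\<alpha> = [a]" by (metis le_Suc_eq le_zero_eq length_0_conv length_Suc_conv One_nat_def)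
  then show ?thesis using \<alpha> by simp
qed

lemma parab_rev: "xs \<in> lists I \<Longrightarrow> prod_list (rev xs) \<in> parab I"
  unfolding parab_def by (intro CollectI exI[of _ "rev xs"]) auto

lemma C2:
  assumes cs: "coxeter_system (unitgrp::'a::monoid_mult set) S"
    and IJL: "I \<subseteq> S" "J \<subseteq> S" "L \<subseteq> S"
    and abk: "a \<in> parab I" "k \<in> parab L" "b \<in> parab J" "w = a * k * b"
    and mn: "\<forall>a'\<in>parab I. \<forall>b'\<in>parab J. cox_len S w \<le> cox_len S (a' * w * b')"
  shows "w \<in> parab L"
proof -
  let ?P = "\<lambda>n. \<exists>\<alpha>\<in>lists I. \<exists>\<kappa>\<in>lists L. \<exists>\<beta>\<in>lists J.
              length \<alpha> + length \<kappa> + length \<beta> = n \<and> prod_list \<alpha> * prod_list \<kappa> * prod_list \<beta> = w"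
  have ex: "\<exists>n. ?P n" using abk unfolding parab_def by blast
  obtain \<alpha> \<kappa> \<beta> where m: "\<alpha> \<in> lists I" "\<kappa> \<in> lists L" "\<beta> \<in> lists J"
    "length \<alpha> + length \<kappa> + length \<beta> = (LEAST n. ?P n)"
    "prod_list \<alpha> * prod_list \<kappa> * prod_list \<beta> = w"
    using LeastI_ex[OF ex] by blast
  let ?\<gamma> = "\<alpha> @ \<kappa> @ \<beta>"
  have \<gamma>S: "?\<gamma> \<in> lists S" using m IJL by auto
  have pg: "prod_list ?\<gamma> = w" using m(5) by (simp add: mult.assoc)
  have inv: "\<forall>x\<in>set ?\<gamma>. x * x = 1" using cs_facts(3)[OF cs] \<gamma>S by auto
  have d: "distinct (refls ?\<gamma>)"
  proof (rule ccontr)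
    assume "\<not> distinct (refls ?\<gamma>)"
    then obtain A where A: "length (nths ?\<gamma> A) < length ?\<gamma>" "prod_list (nths ?\<gamma> A) = prod_list ?\<gamma>"
      using del_lemma[OF inv] by blast
    define \<alpha>' where "\<alpha>' = nths \<alpha> A"
    define \<kappa>' where "\<kappa>' = nths \<kappa> {j. j + length \<alpha> \<in> A}"
    define \<beta>' where "\<beta>' = nths \<beta> {j. j + length \<kappa> \<in> {j. j + length \<alpha> \<in> A}}"
    have eq: "nths ?\<gamma> A = \<alpha>' @ \<kappa>' @ \<beta>'" unfolding \<alpha>'_def \<kappa>'_def \<beta>'_def
      by (simp add: nths_append)
    have l: "\<alpha>' \<in> lists I" "\<kappa>' \<in> lists L" "\<beta>' \<in> lists J"
      unfolding \<alpha>'_def \<kappa>'_def \<beta>'_def using m(1-3) by (simp_all only: nths_lists)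
    have ln: "length \<alpha>' + length \<kappa>' + length \<beta>' = length (nths ?\<gamma> A)" unfolding eq by simp
    have "prod_list (\<alpha>' @ \<kappa>' @ \<beta>') = w" using A(2) pg unfolding eq by simp
    then have pr: "prod_list \<alpha>' * prod_list \<kappa>' * prod_list \<beta>' = w" by (simp add: mult.assoc)
    have "?P (length (nths ?\<gamma> A))" using l ln pr by blast
    then have "(LEAST n. ?P n) \<le> length (nths ?\<gamma> A)" by (rule Least_le)
    then show False using A m by simp
  qed
  have len: "length ?\<gamma> \<le> cox_len S w" using distinct_len[OF cs \<gamma>S d] pg by simp
  have ia: "prod_list (rev \<alpha>) * prod_list \<alpha> = 1" using inv_word[of \<alpha>] inv by auto
  have ib: "prod_list \<beta> * prod_list (rev \<beta>) = 1" using inv_word[of \<beta>] inv by auto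
  have "prod_list (rev \<alpha>) * w * prod_list (rev \<beta>) =
        (prod_list (rev \<alpha>) * prod_list \<alpha>) * prod_list \<kappa> * (prod_list \<beta> * prod_list (rev \<beta>))"
    unfolding m(5)[symmetric] by (simp add: mult.assoc)
  also have "\<dots> = prod_list \<kappa>" using ia ib by simp
  finally have e: "prod_list (rev \<alpha>) * w * prod_list (rev \<beta>) = prod_list \<kappa>" .
  have "cox_len S w \<le> cox_len S (prod_list \<kappa>)"
    using mn parab_rev[OF m(1)] parab_rev[OF m(3)] e by metis
  also have "\<dots> \<le> length \<kappa>" using cox_len_le[of \<kappa> S] m(2) IJL by auto
  finally have "cox_len S w \<le> length \<kappa>" .
  moreover have "length ?\<gamma> = length \<alpha> + length \<kappa> + length \<beta>" by simp
  ultimately have "length \<alpha> = 0 \<and> length \<beta> = 0" using len by linarith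
  then have "w = prod_list \<kappa>" using m(5) by simp
  then show ?thesis using m(2) unfolding parab_def by blast
qed

lemma inv_unique:
  assumes "u * v = 1" "v * u = 1" "u * v' = 1" "v' * u = (1::'a::monoid_mult)"
  shows "v = v'"
proof -
  have "v = v * (u * v')" using assms by simp
  also have "\<dots> = (v * u) * v'" by (simp add: mult.assoc)
  also have "\<dots> = v'" using assms by simp
  finally show ?thesis .
qed

lemma unit_inv: assumes "u \<in> unitgrp"
  shows "u * uinv u = 1" "uinv u * u = (1::'a::monoid_mult)"
proof -
  obtain v where v: "u * v = 1" "v * u = 1" using assms unfolding unitgrp_def by blast
  have "uinv u = v" unfolding uinv_def
    by (rule the_equality) (use v inv_unique in blast)+
  then show "u * uinv u = 1" "uinv u * u = 1" using v by auto
qed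

lemma uinv_eq: assumes "u * v = 1" "v * u = (1::'a::monoid_mult)" shows "uinv u = v"
proof -
  have "u \<in> unitgrp" using assms unfolding unitgrp_def by blast
  then show ?thesis using unit_inv[of u] assms inv_unique by metis
qed

lemma one_unit[simp]: "(1::'a::monoid_mult) \<in> unitgrp" unfolding unitgrp_def by auto
lemma uinv_one[simp]: "uinv (1::'a::monoid_mult) = 1" by (rule uinv_eq) auto

lemma uinv_unit: "u \<in> unitgrp \<Longrightarrow> uinv u \<in> (unitgrp::'a::monoid_mult set)"
  using unit_inv[of u] unfolding unitgrp_def by blast

lemma uinv_uinv: "u \<in> unitgrp \<Longrightarrow> uinv (uinv u) = (u::'a::monoid_mult)"
  using unit_inv[of u] by (intro uinv_eq) auto

lemma unit_mult: assumes "u \<in> unitgrp" "v \<in> unitgrp"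
  shows "u * v \<in> (unitgrp::'a::monoid_mult set)" "uinv (u * v) = uinv v * uinv u"
proof -
  have a: "(u * v) * (uinv v * uinv u) = 1"
    using unit_inv[OF assms(1)] unit_inv[OF assms(2)]
    by (metis mult.assoc mult_1_left)
  have b: "(uinv v * uinv u) * (u * v) = 1"
    using unit_inv[OF assms(1)] unit_inv[OF assms(2)]
    by (metis mult.assoc mult_1_left)
  show "u * v \<in> unitgrp" using a b unfolding unitgrp_def by blast
  show "uinv (u * v) = uinv v * uinv u" using a b by (rule uinv_eq)
qed

lemma invol_uinv: "s * s = (1::'a::monoid_mult) \<Longrightarrow> uinv s = s"
  by (rule uinv_eq) auto

definition cj :: "'a::monoid_mult \<Rightarrow> 'a \<Rightarrow> 'a" where
  "cj w z = w * z * uinv w"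

lemma cj_mult: "w \<in> unitgrp \<Longrightarrow> cj w (a * b) = cj w a * cj w b"
  unfolding cj_def using unit_inv[of w] by (simp add: mult.assoc) (metis mult.assoc mult_1_left)

lemma cj_comp: "u \<in> unitgrp \<Longrightarrow> v \<in> unitgrp \<Longrightarrow> cj (u * v) z = cj u (cj v z)"
  unfolding cj_def by (simp add: unit_mult mult.assoc)

lemma cj_one[simp]: "cj 1 z = z" unfolding cj_def by simp

lemma cj_inv: "w \<in> unitgrp \<Longrightarrow> cj (uinv w) (cj w z) = z"
  using cj_comp[of "uinv w" w z] uinv_unit[of w] unit_inv[of w] by simp

lemma cj_inv2: "w \<in> unitgrp \<Longrightarrow> cj w (cj (uinv w) z) = z"
  using cj_comp[of w "uinv w" z] uinv_unit[of w] unit_inv[of w] by simp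

lemma cj_idem: "w \<in> unitgrp \<Longrightarrow> z \<in> idems \<Longrightarrow> cj w z \<in> idems"
  using cj_mult[of w z z] unfolding idems_def by simp

lemma cj_ileq: "w \<in> unitgrp \<Longrightarrow> ileq a b \<Longrightarrow> ileq (cj w a) (cj w b)"
  using cj_mult[of w a b] cj_mult[of w b a] unfolding ileq_def by simp

lemma Wc_iff: "w \<in> unitgrp \<Longrightarrow> (w \<in> Wc z) = (cj w z = z)"
proof -
  assume w: "w \<in> unitgrp"
  have "w * z = z * w \<longleftrightarrow> w * z * uinv w = z"
  proof
    assume "w * z = z * w" then show "w * z * uinv w = z" using unit_inv[OF w] by (simp add: mult.assoc)
  next
    assume "w * z * uinv w = z"
    then have "w * z * uinv w * w = z * w" by simp
    then show "w * z = z * w" using unit_inv[OF w] by (simp add: mult.assoc)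
  qed
  then show ?thesis using w unfolding Wc_def cj_def by simp
qed

lemma ileq_trans: "ileq a b \<Longrightarrow> ileq b c \<Longrightarrow> ileq a (c::'a::monoid_mult)"
  unfolding ileq_def by (metis mult.assoc)

lemma ileq_antisym: "ileq a b \<Longrightarrow> ileq b a \<Longrightarrow> a = (b::'a::monoid_mult)"
  unfolding ileq_def by metis

lemma ileq_refl: "a \<in> idems \<Longrightarrow> ileq a a" unfolding ileq_def idems_def by simp

lemma parab_sub:
  assumes "1 \<in> H" "\<forall>a\<in>H. \<forall>b\<in>H. a * b \<in> H" "I \<subseteq> H"
  shows "parab I \<subseteq> (H::'a::monoid_mult set)"
proof
  fix x assume "x \<in> parab I"
  then obtain ws where ws: "ws \<in> lists I" "x = prod_list ws" unfolding parab_def by blast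
  have "prod_list ws \<in> H" using ws(1)
    by (induct ws) (use assms in auto)
  then show "x \<in> H" using ws by simp
qed

lemma parab_one: "1 \<in> parab I" unfolding parab_def by (auto intro!: exI[of _ "[]"])
lemma parab_gen: "s \<in> I \<Longrightarrow> s \<in> parab I" unfolding parab_def by (auto intro!: exI[of _ "[s]"])
lemma parab_mult: assumes "a \<in> parab I" "b \<in> parab I" shows "a * b \<in> parab I"
proof -
  obtain xs ys where "xs \<in> lists I" "ys \<in> lists I" "a = prod_list xs" "b = prod_list ys"
    using assms unfolding parab_def by blast
  then show ?thesis unfolding parab_def by (intro CollectI exI[of _ "xs @ ys"]) auto
qed
lemma parab_mono: "I \<subseteq> J \<Longrightarrow> parab I \<subseteq> parab J"
  by (intro parab_sub parab_one) (auto simp: parab_mult parab_gen)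

lemma Wc_one: "1 \<in> Wc z" unfolding Wc_def by simp
lemma Wc_mult: "a \<in> Wc z \<Longrightarrow> b \<in> Wc z \<Longrightarrow> a * b \<in> Wc z"
  unfolding Wc_def by (auto simp: unit_mult) (metis mult.assoc)
lemma Wc_uinv: assumes "a \<in> Wc z" shows "uinv a \<in> Wc z"
proof -
  have a: "a \<in> unitgrp" "a * z = z * a" using assms unfolding Wc_def by auto
  have "cj a z = z" using Wc_iff a assms by blast
  then have "cj (uinv a) z = z" using cj_inv[OF a(1), of z] by simp
  then show ?thesis using Wc_iff uinv_unit a(1) by blast
qed
lemma Wstar_one: "1 \<in> Wstar z" unfolding Wstar_def by simp
lemma Wstar_mult: "a \<in> Wstar z \<Longrightarrow> b \<in> Wstar z \<Longrightarrow> a * b \<in> Wstar z"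
  unfolding Wstar_def by (auto simp: unit_mult) (metis mult.assoc)+

lemma Wstar_fix: assumes "k \<in> Wstar y" "ileq z y" shows "cj k z = z"
proof -
  have k: "k \<in> unitgrp" "k * y = y" "y * k = y" using assms unfolding Wstar_def by auto
  have z: "z * y = z" "y * z = z" using assms unfolding ileq_def by auto
  have "y * uinv k = y" using k unit_inv[OF k(1)] by (metis mult.assoc mult_1_right)
  have "k * z = z" using k z by (metis mult.assoc)
  moreover have "z * uinv k = z" using z \<open>y * uinv k = y\<close> by (metis mult.assoc)
  ultimately show ?thesis unfolding cj_def by simp
qed

lemma gen_facts:
  assumes "gen_RC_system \<Lambda> (S::'a::monoid_mult set)"
  shows "\<And>e f. e \<in> idems \<Longrightarrow> f \<in> idems \<Longrightarrow> e * f = f * (e::'a)"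
    "\<Lambda> \<subseteq> idems"
    "\<And>e. e \<in> idems \<Longrightarrow> \<exists>!f. f \<in> \<Lambda> \<and> (\<exists>w\<in>unitgrp. cj w f = e)"
    "coxeter_system unitgrp S"
    "\<And>e1 e2. e1 \<in> idems \<Longrightarrow> e2 \<in> idems \<Longrightarrow> ileq e1 e2 \<Longrightarrow>
        (\<exists>w\<in>unitgrp. \<exists>f1\<in>\<Lambda>. \<exists>f2\<in>\<Lambda>. ileq f1 f2 \<and> cj w f1 = e1 \<and> cj w f2 = e2)"
    "\<And>e. e \<in> \<Lambda> \<Longrightarrow> \<exists>I. I \<subseteq> S \<and> Wc e = parab I"
    "\<And>e. e \<in> \<Lambda> \<Longrightarrow> \<exists>I. I \<subseteq> S \<and> Wstar e = parab I"
    "\<And>e f. e \<in> \<Lambda> \<Longrightarrow> f \<in> \<Lambda> \<Longrightarrow> ileq e f \<Longrightarrow> lamstar S e \<subseteq> lamstar S f"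
proof -
  note D = assms[unfolded gen_RC_system_def]
  note r = conjunct2[OF D]
  note d2b = conjunct1[OF r]
  note r2 = conjunct2[OF r]
  note r3 = conjunct2[OF r2]
  note r4 = conjunct2[OF r3]
  note d = conjunct1[OF D] conjunct1[OF d2b] conjunct1[OF conjunct2[OF d2b]] conjunct1[OF r2]
    conjunct1[OF r3] conjunct1[OF r4] conjunct2[OF r4]
  have c: "\<forall>e\<in>idems. \<forall>f\<in>idems. e * f = f * (e::'a)" using conjunct2[OF conjunct2[OF d(1)[unfolded factorisable_def]]] .
  show "\<And>e f. e \<in> idems \<Longrightarrow> f \<in> idems \<Longrightarrow> e * f = f * (e::'a)" using c by blast
  show "\<Lambda> \<subseteq> idems" by (rule d(2))
  show "\<And>e. e \<in> idems \<Longrightarrow> \<exists>!f. f \<in> \<Lambda> \<and> (\<exists>w\<in>unitgrp. cj w f = e)"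
    using d(3) unfolding cj_def by blast
  show "coxeter_system unitgrp S" by (rule d(4))
  show "\<And>e1 e2. e1 \<in> idems \<Longrightarrow> e2 \<in> idems \<Longrightarrow> ileq e1 e2 \<Longrightarrow>
        (\<exists>w\<in>unitgrp. \<exists>f1\<in>\<Lambda>. \<exists>f2\<in>\<Lambda>. ileq f1 f2 \<and> cj w f1 = e1 \<and> cj w f2 = e2)"
    using d(5) unfolding cj_def by blast
  show "\<And>e. e \<in> \<Lambda> \<Longrightarrow> \<exists>I. I \<subseteq> S \<and> Wc e = parab I" using d(6) by blast
  show "\<And>e. e \<in> \<Lambda> \<Longrightarrow> \<exists>I. I \<subseteq> S \<and> Wstar e = parab I" using d(6) by blast
  show "\<And>e f. e \<in> \<Lambda> \<Longrightarrow> f \<in> \<Lambda> \<Longrightarrow> ileq e f \<Longrightarrow> lamstar S e \<subseteq> lamstar S f"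
    using d(7) by blast
qed

lemma rep_unique:
  assumes g: "gen_RC_system \<Lambda> S" and f: "f \<in> \<Lambda>" "f' \<in> \<Lambda>" "u \<in> unitgrp" "u' \<in> unitgrp"
    "cj u f = x" "cj u' f' = x"
  shows "f = f'"
proof -
  have "x \<in> idems" using f cj_idem gen_facts(2)[OF g] by blast
  then show ?thesis using gen_facts(3)[OF g] f by blast
qed

lemma conj_le_eq:
  fixes e1 e2 :: "'a::monoid_mult"
  assumes g: "gen_RC_system \<Lambda> (S::'a set)" and e: "e1 \<in> idems" "e2 \<in> idems" "ileq e1 e2"
    "u \<in> unitgrp" "cj u e1 = e2"
  shows "e1 = e2"
proof -
  obtain w f1 f2 where w: "w \<in> unitgrp" "f1 \<in> \<Lambda>" "f2 \<in> \<Lambda>" "ileq f1 f2" "cj w f1 = e1" "cj w f2 = e2"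
    using gen_facts(5)[OF g e(1-3)] by blast
  have "cj (u * w) f1 = e2" using cj_comp[OF e(4) w(1)] w e by simp
  then have "f1 = f2" using rep_unique[OF g w(2) w(3) unit_mult(1)[OF e(4) w(1)] w(1)] w by blast
  then show ?thesis using w by simp
qed

lemma lam_prop:
  assumes g: "gen_RC_system \<Lambda> S" and e: "e \<in> \<Lambda>"
  shows "lam S e \<subseteq> S \<and> Wc e = parab (lam S e)"
proof -
  have cs: "coxeter_system unitgrp S" using gen_facts(4)[OF g] .
  obtain I where I: "I \<subseteq> S" "Wc e = parab I" using gen_facts(6)[OF g e] by blast
  have "lam S e = I" unfolding lam_def
  proof (rule the_equality)
    show "I \<subseteq> S \<and> Wc e = parab I" using I by simp
  next
    fix J assume J: "J \<subseteq> S \<and> Wc e = parab J"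
    show "J = I"
    proof
      show "J \<subseteq> I" using C1[OF cs I(1)] J I parab_gen by blast
      show "I \<subseteq> J" using C1[OF cs, of J] J I parab_gen by blast
    qed
  qed
  then show ?thesis using I by simp
qed

lemma S_unit: "gen_RC_system \<Lambda> S \<Longrightarrow> S \<subseteq> unitgrp"
  using cs_facts(1) gen_facts(4) by blast

lemma lamstar_Wc:
  assumes g: "gen_RC_system \<Lambda> S" shows "parab (lamstar S f) \<subseteq> Wc f"
proof (rule parab_sub[OF Wc_one])
  show "\<forall>a\<in>Wc f. \<forall>b\<in>Wc f. a * b \<in> Wc f" using Wc_mult by blast
  show "lamstar S f \<subseteq> Wc f" using S_unit[OF g] unfolding lamstar_def Wc_def by auto
qed

lemma dec:
  assumes g: "gen_RC_system \<Lambda> S" and f: "f \<in> \<Lambda>" and y: "y \<in> Wc f"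
  shows "\<exists>k\<in>Wstar f. \<exists>a\<in>parab (lamstar S f). y = k * a"
proof -
  obtain K where K: "K \<subseteq> S" "Wc f = parab K" using gen_facts(6)[OF g f] by blast
  obtain ws where ws: "ws \<in> lists K" "y = prod_list ws" using y K unfolding parab_def by blast
  have inv: "\<forall>s\<in>S. s * s = 1" using cs_facts(3)[OF gen_facts(4)[OF g]] .
  have SU: "S \<subseteq> unitgrp" using S_unit[OF g] .
  have "\<exists>k\<in>Wstar f. \<exists>a\<in>parab (lamstar S f). prod_list ws = k * a" using ws(1)
  proof (induct ws)
    case Nil
    have "prod_list [] = 1 * (1::'a)" by simp
    then show ?case using Wstar_one parab_one by blast
  next
    case (Cons s ws)
    then obtain k a where ka: "k \<in> Wstar f" "a \<in> parab (lamstar S f)" "prod_list ws = k * a" by auto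
    have sK: "s \<in> K" using Cons by simp
    have sS: "s \<in> S" using sK K by auto
    have ss: "s * s = 1" using inv sS by auto
    have sW: "s \<in> Wc f" using K parab_gen[OF sK] by simp
    have sfs: "s * f = f * s" using sW unfolding Wc_def by simp
    show ?case
    proof (cases "s \<in> Wstar f")
      case True
      have "prod_list (s # ws) = (s * k) * a" using ka(3) by (simp add: mult.assoc)
      then show ?thesis using ka Wstar_mult[OF True ka(1)] by blast
    next
      case False
      then have "s * f \<noteq> f" using sfs SU sS unfolding Wstar_def by auto
      then have sl: "s \<in> lamstar S f" using sS sfs unfolding lamstar_def by auto
      have kU: "k \<in> unitgrp" "k * f = f" "f * k = f" using ka unfolding Wstar_def by auto
      have skU: "s * k * s \<in> unitgrp" using SU sS kU unit_mult by blast
      have 1: "s * k * s * f = f" using sfs kU ss by (metis mult.assoc mult_1_right)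
      have 2: "f * (s * k * s) = f" using sfs kU ss by (metis mult.assoc mult_1_right)
      have sks: "s * k * s \<in> Wstar f" using skU 1 2 unfolding Wstar_def by simp
      have sa: "s * a \<in> parab (lamstar S f)" using parab_mult[OF parab_gen[OF sl] ka(2)] .
      have "s * (s * a) = a" using ss by (metis mult.assoc mult_1_left)
      then have "prod_list (s # ws) = (s * k * s) * (s * a)" using ka(3) by (simp add: mult.assoc)
      then show ?thesis using sks sa by blast
    qed
  qed
  then show ?thesis using ws by simp
qed

lemma idem_mult:
  assumes g: "gen_RC_system \<Lambda> (S::'a::monoid_mult set)" and "a \<in> idems" "b \<in> (idems::'a set)"
  shows "a * b \<in> idems"
proof -
  have c: "b * a = a * b" using gen_facts(1)[OF g] assms by blast
  have "(a * b) * (a * b) = a * (b * a) * b" by (simp add: mult.assoc)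
  also have "\<dots> = (a * a) * (b * b)" using c by (simp add: mult.assoc)
  also have "\<dots> = a * b" using assms unfolding idems_def by simp
  finally show ?thesis unfolding idems_def by simp
qed

lemma idem_ileq_left:
  assumes g: "gen_RC_system \<Lambda> (S::'a::monoid_mult set)" and "a \<in> idems" "b \<in> (idems::'a set)"
  shows "ileq (a * b) a" "ileq (a * b) b"
proof -
  have c: "b * a = a * b" using gen_facts(1)[OF g] assms by blast
  have aa: "a * a = a" "b * b = b" using assms unfolding idems_def by auto
  show "ileq (a * b) a" unfolding ileq_def using c aa by (metis mult.assoc)
  show "ileq (a * b) b" unfolding ileq_def using c aa by (metis mult.assoc)
qed

lemma part2:
  assumes g: "gen_RC_system \<Lambda> (S::'a::monoid_mult set)" and e: "e \<in> \<Lambda>"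
    and least: "\<forall>f\<in>\<Lambda>. ileq e f"
  shows "lam S e = S"
proof -
  have cs: "coxeter_system unitgrp S" using gen_facts(4)[OF g] .
  have eI: "e \<in> idems" using e gen_facts(2)[OF g] by blast
  have sW: "s \<in> parab (lam S e)" if sS: "s \<in> S" for s
  proof -
    have sU: "s \<in> unitgrp" using S_unit[OF g] sS by blast
    let ?x = "cj s e"
    have xI: "?x \<in> idems" using cj_idem[OF sU eI] .
    let ?g = "e * ?x"
    have gI: "?g \<in> idems" using idem_mult[OF g eI xI] .
    have ge: "ileq ?g e" using idem_ileq_left[OF g eI xI] by simp
    obtain w f1 f2 where w: "w \<in> unitgrp" "f1 \<in> \<Lambda>" "f2 \<in> \<Lambda>" "ileq f1 f2" "cj w f1 = ?g" "cj w f2 = e"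
      using gen_facts(5)[OF g gI eI ge] by blast
    have "f2 = e" using rep_unique[OF g w(3) e w(1) one_unit] w(6) by simp
    then have "f1 = e" using ileq_antisym w(4) least w(2) by blast
    then have "?g = e" using w \<open>f2 = e\<close> by simp
    then have "ileq e ?x" using idem_ileq_left(2)[OF g eI xI] by simp
    then have "e = ?x" using conj_le_eq[OF g eI xI _ sU] by simp
    then have "s \<in> Wc e" using Wc_iff[OF sU] by simp
    then show ?thesis using lam_prop[OF g e] by simp
  qed
  have "lam S e \<subseteq> S" using lam_prop[OF g e] by simp
  moreover have "S \<subseteq> lam S e" using C1[OF cs] sW lam_prop[OF g e] by blast
  ultimately show ?thesis by blast
qed


lemma Wstar_sub_Wc: "Wstar z \<subseteq> Wc z" unfolding Wstar_def Wc_def by auto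

lemma part3:
  assumes g: "gen_RC_system \<Lambda> (S::'a::monoid_mult set)" and e: "e \<in> \<Lambda>" and f: "f \<in> \<Lambda>"
    and wR: "w \<in> Red S e f"
  shows "is_max_ileq {h \<in> \<Lambda>. ileq h e \<and> ileq h f \<and> w \<in> Wc h} (e * w * f) \<and>
         e * w * f = f * uinv w * e"
proof -
  have cs: "coxeter_system unitgrp S" using gen_facts(4)[OF g] .
  have wU: "w \<in> unitgrp" and mn: "\<forall>a\<in>parab (lam S e). \<forall>b\<in>parab (lam S f).
                 cox_len S w \<le> cox_len S (a * w * b)" using wR unfolding Red_def by auto
  have le: "lam S e \<subseteq> S" "Wc e = parab (lam S e)" using lam_prop[OF g e] by auto
  have lf: "lam S f \<subseteq> S" "Wc f = parab (lam S f)" using lam_prop[OF g f] by auto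
  have eI: "e \<in> idems" and fI: "f \<in> idems" using e f gen_facts(2)[OF g] by auto
  have wiU: "uinv w \<in> unitgrp" using uinv_unit[OF wU] .
  have ww: "w * uinv w = 1" "uinv w * w = 1" using unit_inv[OF wU] by auto
  let ?x = "cj w f"
  have xI: "?x \<in> idems" using cj_idem[OF wU fI] .
  let ?g = "e * ?x"
  have gI: "?g \<in> idems" using idem_mult[OF g eI xI] .
  have ge: "ileq ?g e" using idem_ileq_left[OF g eI xI] by simp
  obtain u f1 f2 where u: "u \<in> unitgrp" "f1 \<in> \<Lambda>" "f2 \<in> \<Lambda>" "ileq f1 f2" "cj u f1 = ?g" "cj u f2 = e"
    using gen_facts(5)[OF g gI eI ge] by blast
  have "f2 = e" using rep_unique[OF g u(3) e u(1) one_unit] u(6) by simp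
  then have f1e: "ileq f1 e" and ue: "cj u e = e" using u by auto
  have uWe: "u \<in> Wc e" using Wc_iff[OF u(1)] ue by simp
  let ?e' = "cj (uinv w) e"
  have e'I: "?e' \<in> idems" using cj_idem[OF wiU eI] .
  let ?g' = "cj (uinv w) ?g"
  have g'eq: "?g' = ?e' * f" using cj_mult[OF wiU, of e ?x] cj_inv[OF wU] by simp
  have g'I: "?g' \<in> idems" using cj_idem[OF wiU gI] .
  have g'f: "ileq ?g' f" using idem_ileq_left(2)[OF g e'I fI] g'eq by simp
  obtain v f1' f2' where v: "v \<in> unitgrp" "f1' \<in> \<Lambda>" "f2' \<in> \<Lambda>" "ileq f1' f2'" "cj v f1' = ?g'"
      "cj v f2' = f"
    using gen_facts(5)[OF g g'I fI g'f] by blast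
  have "f2' = f" using rep_unique[OF g v(3) f v(1) one_unit] v(6) by simp
  then have vf: "cj v f = f" using v by simp
  have vWf: "v \<in> Wc f" using Wc_iff[OF v(1)] vf by simp
  have wvU: "w * v \<in> unitgrp" using unit_mult(1)[OF wU v(1)] .
  have "cj (w * v) f1' = ?g" using cj_comp[OF wU v(1)] v(5) cj_inv2[OF wU] by simp
  then have "f1' = f1" using rep_unique[OF g v(2) u(2) wvU u(1)] u(5) by simp
  then have f1f: "ileq f1 f" using v(4) \<open>f2' = f\<close> by simp
  have uiU: "uinv u \<in> unitgrp" using uinv_unit[OF u(1)] .
  let ?y = "uinv u * w * v"
  have yU: "?y \<in> unitgrp" using unit_mult(1)[OF unit_mult(1)[OF uiU wU] v(1)] .
  have "cj ?y f1 = cj (uinv u) (cj w (cj v f1))"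
    using cj_comp[OF unit_mult(1)[OF uiU wU] v(1)] cj_comp[OF uiU wU] by simp
  also have "\<dots> = cj (uinv u) ?g" using v(5) \<open>f1' = f1\<close> cj_inv2[OF wU] by simp
  also have "\<dots> = f1" using cj_inv[OF u(1), of f1] u(5) by simp
  finally have yW: "?y \<in> Wc f1" using Wc_iff[OF yU] by simp
  obtain k a where ka: "k \<in> Wstar f1" "a \<in> parab (lamstar S f1)" "?y = k * a"
    using dec[OF g u(2) yW] by blast
  obtain J where J: "J \<subseteq> S" "Wstar f1 = parab J" using gen_facts(7)[OF g u(2)] by blast
  have "parab (lamstar S f1) \<subseteq> parab (lamstar S f)"
    using parab_mono gen_facts(8)[OF g u(2) f f1f] by blast
  then have aWf: "a \<in> Wc f" using ka(2) lamstar_Wc[OF g] by blast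
  have viWf: "uinv v \<in> Wc f" using Wc_uinv[OF vWf] .
  have avWf: "a * uinv v \<in> parab (lam S f)" using Wc_mult[OF aWf viWf] lf by simp
  have vv: "v * uinv v = 1" using unit_inv[OF v(1)] by simp
  have uu: "u * uinv u = 1" using unit_inv[OF u(1)] by simp
  have "u * k * (a * uinv v) = u * (k * a) * uinv v" by (simp add: mult.assoc)
  also have "\<dots> = u * ?y * uinv v" using ka(3) by simp
  also have "\<dots> = (u * uinv u) * w * (v * uinv v)" by (simp add: mult.assoc)
  also have "\<dots> = w" using uu vv by simp
  finally have wdec: "w = u * k * (a * uinv v)" by simp
  have "w \<in> parab J"
    using C2[OF cs le(1) lf(1) J(1), of u k "a * uinv v" w] uWe le(2) ka(1) J(2) avWf wdec mn
    by simp
  then have wS: "w \<in> Wstar f1" using J by simp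
  then have wf1: "w * f1 = f1" "f1 * w = f1" unfolding Wstar_def by auto
  have f1wi: "f1 * uinv w = f1" using wf1 ww by (metis mult.assoc mult_1_right)
  have wif1: "uinv w * f1 = f1" using wf1 ww by (metis mult.assoc mult_1_left)
  have f1I: "f1 \<in> idems" using u(2) gen_facts(2)[OF g] by blast
  have "f1 * ?g = (f1 * e) * ?x" by (simp add: mult.assoc)
  also have "\<dots> = f1 * ?x" using f1e unfolding ileq_def by simp
  also have "\<dots> = f1 * w * f * uinv w" unfolding cj_def by (simp add: mult.assoc)
  also have "\<dots> = f1" using wf1 f1f f1wi unfolding ileq_def by simp
  finally have f1g1: "f1 * ?g = f1" .
  then have "?g * f1 = f1" using gen_facts(1)[OF g gI f1I] by simp
  then have "ileq f1 ?g" using f1g1 unfolding ileq_def by simp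
  then have gf1: "?g = f1" using conj_le_eq[OF g f1I gI _ u(1)] u(5) by simp
  have xw: "?x * w = w * f" unfolding cj_def using ww by (simp add: mult.assoc)
  have ewf: "e * w * f = f1"
  proof -
    have "e * w * f = e * (w * f)" by (simp add: mult.assoc)
    also have "\<dots> = e * (?x * w)" using xw by simp
    also have "\<dots> = ?g * w" by (simp add: mult.assoc)
    finally show ?thesis using gf1 wf1 by simp
  qed
  have wix: "uinv w * ?x = f * uinv w" unfolding cj_def using ww by (metis mult.assoc mult_1_left)
  have fwe: "f * uinv w * e = f1"
  proof -
    have "f * uinv w * e = (uinv w * ?x) * e" using wix by simp
    also have "\<dots> = uinv w * (?x * e)" by (simp add: mult.assoc)
    also have "?x * e = ?g" using gen_facts(1)[OF g xI eI] by simp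
    finally show ?thesis using gf1 wif1 by simp
  qed
  have wWf1: "w \<in> Wc f1" using wS Wstar_sub_Wc by blast
  have mx: "ileq h f1" if h: "h \<in> \<Lambda>" "ileq h e" "ileq h f" "w \<in> Wc h" for h
  proof -
    obtain k' a' where ka': "k' \<in> Wstar h" "a' \<in> parab (lamstar S h)" "w = k' * a'"
      using dec[OF g h(1) h(4)] by blast
    obtain J' where J': "J' \<subseteq> S" "Wstar h = parab J'" using gen_facts(7)[OF g h(1)] by blast
    have "parab (lamstar S h) \<subseteq> parab (lamstar S f)"
      using parab_mono gen_facts(8)[OF g h(1) f h(3)] by blast
    then have a'W: "a' \<in> parab (lam S f)" using ka'(2) lamstar_Wc[OF g] lf by blast
    have "w \<in> parab J'"
      using C2[OF cs le(1) lf(1) J'(1), of 1 k' a' w] parab_one[of "lam S e"] ka' J'(2) a'W mn by simp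
    then have "w * h = h" "h * w = h" using J' unfolding Wstar_def by auto
    then show ?thesis using h(2,3) ewf unfolding ileq_def by (metis mult.assoc)
  qed
  show ?thesis unfolding is_max_ileq_def using ewf fwe u(2) f1e f1f wWf1 mx by auto
qed


lemma chain_trans:
  assumes ch: "\<forall>i. Suc i < m \<longrightarrow> ileq (f i) (f (Suc i))" and fI: "f n \<in> idems" and n: "n < m"
  shows "i \<le> n \<Longrightarrow> ileq (f i) (f n)"
proof -
  have "\<forall>d. d \<le> n \<longrightarrow> ileq (f (n - d)) (f n)"
  proof
    fix d show "d \<le> n \<longrightarrow> ileq (f (n - d)) (f n)"
    proof (induct d)
      case 0 then show ?case using ileq_refl[OF fI] by simp
    next
      case (Suc d)
      show ?case
      proof
        assume d: "Suc d \<le> n"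
        then have "Suc (n - Suc d) = n - d" by simp
        then have "ileq (f (n - Suc d)) (f (n - d))" using ch n d by (metis diff_le_self le_less_trans)
        then show "ileq (f (n - Suc d)) (f n)" using Suc d ileq_trans by simp
      qed
    qed
  qed
  moreover assume "i \<le> n"
  ultimately show ?thesis by (metis diff_diff_cancel diff_le_self)
qed

lemma part1:
  assumes g: "gen_RC_system \<Lambda> (S::'a::monoid_mult set)"
  shows "(\<forall>i<m. e i \<in> idems) \<and> (\<forall>i. Suc i < m \<longrightarrow> ileq (e i) (e (Suc i))) \<longrightarrow>
            (\<exists>w\<in>unitgrp. \<exists>f::nat \<Rightarrow> 'a. (\<forall>i<m. f i \<in> \<Lambda>) \<and>
               (\<forall>i. Suc i < m \<longrightarrow> ileq (f i) (f (Suc i))) \<and>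
               (\<forall>i<m. cj w (f i) = e i))"
proof (induct m)
  case 0
  show ?case by (intro impI bexI[OF _ one_unit] exI[of _ "\<lambda>_. 1"]) simp
next
  case (Suc m)
  show ?case
  proof
    assume H: "(\<forall>i<Suc m. e i \<in> idems) \<and> (\<forall>i. Suc i < Suc m \<longrightarrow> ileq (e i) (e (Suc i)))"
    show "\<exists>w\<in>unitgrp. \<exists>f::nat \<Rightarrow> 'a. (\<forall>i<Suc m. f i \<in> \<Lambda>) \<and>
               (\<forall>i. Suc i < Suc m \<longrightarrow> ileq (f i) (f (Suc i))) \<and> (\<forall>i<Suc m. cj w (f i) = e i)"
    proof (cases m)
      case 0
      have "e 0 \<in> idems" using H by simp
      then obtain f0 w where f0: "f0 \<in> \<Lambda>" "w \<in> unitgrp" "cj w f0 = e 0"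
        using gen_facts(3)[OF g] by blast
      show ?thesis using 0 f0 by (intro bexI[OF _ f0(2)] exI[of _ "\<lambda>_. f0"]) auto
    next
      case (Suc m')
      have Hm: "(\<forall>i<m. e i \<in> idems) \<and> (\<forall>i. Suc i < m \<longrightarrow> ileq (e i) (e (Suc i)))" using H by auto
      obtain w f where wf: "w \<in> unitgrp" "\<forall>i<m. f i \<in> \<Lambda>" "\<forall>i. Suc i < m \<longrightarrow> ileq (f i) (f (Suc i))"
        "\<forall>i<m. cj w (f i) = e i" using Suc.hyps Hm by blast
      let ?p = "f m'"
      have pL: "?p \<in> \<Lambda>" using wf Suc by simp
      have pI: "?p \<in> idems" using pL gen_facts(2)[OF g] by blast
      have wp: "cj w ?p = e m'" using wf Suc by simp
      have wiU: "uinv w \<in> unitgrp" using uinv_unit[OF wf(1)] .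
      let ?x = "cj (uinv w) (e m)"
      have xI: "?x \<in> idems" using cj_idem[OF wiU] H by simp
      have "ileq (e m') (e m)" using H Suc by simp
      then have "ileq (cj (uinv w) (e m')) ?x" using cj_ileq[OF wiU] by blast
      moreover have "cj (uinv w) (e m') = ?p" using wp cj_inv[OF wf(1)] by metis
      ultimately have px: "ileq ?p ?x" by simp
      obtain u g1 g2 where u: "u \<in> unitgrp" "g1 \<in> \<Lambda>" "g2 \<in> \<Lambda>" "ileq g1 g2" "cj u g1 = ?p" "cj u g2 = ?x"
        using gen_facts(5)[OF g pI xI px] by blast
      have "g1 = ?p" using rep_unique[OF g u(2) pL u(1) one_unit] u(5) by simp
      then have up: "cj u ?p = ?p" and pg2: "ileq ?p g2" using u by auto
      have uW: "u \<in> Wc ?p" using Wc_iff[OF u(1)] up by simp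
      obtain k a where ka: "k \<in> Wstar ?p" "a \<in> parab (lamstar S ?p)" "u = k * a"
        using dec[OF g pL uW] by blast
      have "parab (lamstar S ?p) \<subseteq> parab (lamstar S g2)"
        using parab_mono gen_facts(8)[OF g pL u(3) pg2] by blast
      then have aW: "a \<in> Wc g2" using ka(2) lamstar_Wc[OF g] by blast
      have kU: "k \<in> unitgrp" using ka(1) unfolding Wstar_def by simp
      have aU: "a \<in> unitgrp" using aW unfolding Wc_def by simp
      have "cj u g2 = cj k (cj a g2)" using cj_comp[OF kU aU] ka(3) by simp
      also have "cj a g2 = g2" using Wc_iff[OF aU] aW by simp
      finally have kg2: "cj k g2 = ?x" using u(6) by simp
      define f' where "f' = f(m := g2)"
      have wkU: "w * k \<in> unitgrp" using unit_mult(1)[OF wf(1) kU] .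
      have c1: "\<forall>i<Suc m. f' i \<in> \<Lambda>" using wf(2) u(3) unfolding f'_def by auto
      have c2: "\<forall>i. Suc i < Suc m \<longrightarrow> ileq (f' i) (f' (Suc i))"
      proof (intro allI impI)
        fix i assume i: "Suc i < Suc m"
        show "ileq (f' i) (f' (Suc i))"
        proof (cases "Suc i = m")
          case True
          then have "i = m'" using Suc by simp
          then show ?thesis using True pg2 unfolding f'_def by simp
        next
          case False
          then show ?thesis using i wf(3) unfolding f'_def by simp
        qed
      qed
      have c3: "\<forall>i<Suc m. cj (w * k) (f' i) = e i"
      proof (intro allI impI)
        fix i assume i: "i < Suc m"
        show "cj (w * k) (f' i) = e i"
        proof (cases "i = m")
          case True
          then show ?thesis unfolding f'_def using cj_comp[OF wf(1) kU] kg2 cj_inv2[OF wf(1)] by simp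
        next
          case False
          then have im: "i < m" using i by simp
          have mm: "m' < m" "i \<le> m'" using im Suc by auto
          have "ileq (f i) ?p" using chain_trans[OF wf(3) pI mm(1) mm(2)] .
          then have "cj k (f i) = f i" using Wstar_fix[OF ka(1)] by simp
          then show ?thesis unfolding f'_def using False cj_comp[OF wf(1) kU] wf(4) im by simp
        qed
      qed
      show ?thesis using wkU c1 c2 c3 by blast
    qed
  qed
qed

theorem mainTheorem11:
  fixes \<Lambda> S :: "'a::monoid_mult set"
  assumes "gen_RC_system \<Lambda> S"
  shows "(\<forall>(m::nat) (e::nat \<Rightarrow> 'a).
            (\<forall>i<m. e i \<in> idems) \<and> (\<forall>i. Suc i < m \<longrightarrow> ileq (e i) (e (Suc i))) \<longrightarrow>
            (\<exists>w\<in>unitgrp. \<exists>f::nat \<Rightarrow> 'a. (\<forall>i<m. f i \<in> \<Lambda>) \<and>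
               (\<forall>i. Suc i < m \<longrightarrow> ileq (f i) (f (Suc i))) \<and>
               (\<forall>i<m. w * f i * uinv w = e i)))
       \<and> (\<forall>e\<in>\<Lambda>. (\<forall>f\<in>\<Lambda>. ileq e f) \<longrightarrow> lam S e = S)
       \<and> (\<forall>e\<in>\<Lambda>. \<forall>f\<in>\<Lambda>. \<forall>w\<in>Red S e f.
            is_max_ileq {h \<in> \<Lambda>. ileq h e \<and> ileq h f \<and> w \<in> Wc h} (e * w * f) \<and>
            e * w * f = f * uinv w * e)"
proof -
  have A: "\<forall>(m::nat) (e::nat \<Rightarrow> 'a).
            (\<forall>i<m. e i \<in> idems) \<and> (\<forall>i. Suc i < m \<longrightarrow> ileq (e i) (e (Suc i))) \<longrightarrow>
            (\<exists>w\<in>unitgrp. \<exists>f::nat \<Rightarrow> 'a. (\<forall>i<m. f i \<in> \<Lambda>) \<and>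
               (\<forall>i. Suc i < m \<longrightarrow> ileq (f i) (f (Suc i))) \<and>
               (\<forall>i<m. cj w (f i) = e i))"
    by (intro allI) (rule part1[OF assms])
  have B: "\<forall>e\<in>\<Lambda>. (\<forall>f\<in>\<Lambda>. ileq e f) \<longrightarrow> lam S e = S"
    using part2[OF assms] by blast
  have C: "\<forall>e\<in>\<Lambda>. \<forall>f\<in>\<Lambda>. \<forall>w\<in>Red S e f.
            is_max_ileq {h \<in> \<Lambda>. ileq h e \<and> ileq h f \<and> w \<in> Wc h} (e * w * f) \<and>
            e * w * f = f * uinv w * e"
    using part3[OF assms] by blast
  show ?thesis using A B C unfolding cj_def by (intro conjI)
qed

end
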